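(* For every $n\in\mathbb N$, the class $\mathcal T_n$ contains only finitely many isomorphism types, i.e. $\mathcal T_n/\cong$ is a finite set.
   Context: A partial monounary algebra is a pair $(A,f)$ with $A$ a nonempty set and $f$ a partial unary operation on $A$. It is connected if for all $x,y\in A$ there are $m,n\ge0$ with $f^m(x),f^n(y)$ defined and equal. $\mathcal T$ is the class of connected partial monounary algebras $(A,f)$ with exactly one element not in the domain of $f$; this element is denoted $c_A$. For $x\in A$: $f^{-1}(x)=\{y\in\mathrm{dom}f:f(y)=x\}$, $f^{-n}(x)=\bigcup_{z\in f^{-(n-1)}(x)}f^{-1}(z)$, $P(x)=\{x\}\cup\bigcup_{n\ge1}f^{-n}(x)$, regarded as a partial monounary algebra with $f$ restricted to those $y\in P(x)$ with $f(y)$ defined and in $P(x)$. Condition ($\bigstar$): whenever $x_1,x_2,x_3\in A$ with $f(x_1)=f(x_2)=f(x_3)$ and $P(x_1),P(x_2),P(x_3)$ pairwise isomorphic, then $|\{x_1,x_2,x_3\}|\le2$; $\mathcal T^\bigstar$ is the class of members of $\mathcal T$ satisfying ($\bigstar$). Degree: $A^{(\infty)}$ is the set of $x$ admitting $x_0=x,x_1,\dots$ with $x_n\in\mathrm{dom}f$, $f(x_n)=x_{n-1}$ for $n\ge1$; for ordinals $\lambda$, $A^{(\lambda)}=\{x\in A\setminus\bigcup_{\alpha<\lambda}A^{(\alpha)}: f^{-1}(x)\subseteq\bigcup_{\alpha<\lambda}A^{(\alpha)}\}$; $s_f(x)$ is the $\lambda$ with $x\in A^{(\lambda)}$, or $\infty$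 if $x\in A^{(\infty)}$ ($\infty$ exceeds all ordinals). For an ordinal $\beta$, $\mathcal T_\beta=\{(A,f)\in\mathcal T^\bigstar: 0<s_f(c_A)\le\beta\}$. *)

theory Defs
  imports Main
begin

definition pmua :: "'a set \<Rightarrow> ('a \<Rightarrow> 'a option) \<Rightarrow> bool" where
  "pmua A f \<longleftrightarrow> A \<noteq> {} \<and> dom f \<subseteq> A \<and> ran f \<subseteq> A"

primrec fpow :: "('a \<Rightarrow> 'a option) \<Rightarrow> nat \<Rightarrow> 'a \<Rightarrow> 'a option" where
  "fpow f 0 x = Some x"
| "fpow f (Suc m) x = Option.bind (fpow f m x) f"

definition pm_connected :: "'a set \<Rightarrow> ('a \<Rightarrow> 'a option) \<Rightarrow> bool" where
  "pm_connected A f \<longleftrightarrow>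
     (\<forall>x\<in>A. \<forall>y\<in>A. \<exists>m n. fpow f m x \<noteq> None \<and> fpow f m x = fpow f n y)"

definition in_T :: "'a set \<Rightarrow> ('a \<Rightarrow> 'a option) \<Rightarrow> bool" where
  "in_T A f \<longleftrightarrow> pmua A f \<and> pm_connected A f \<and> (\<exists>!c. c \<in> A \<and> c \<notin> dom f)"

definition cA :: "'a set \<Rightarrow> ('a \<Rightarrow> 'a option) \<Rightarrow> 'a" where
  "cA A f = (THE c. c \<in> A \<and> c \<notin> dom f)"

definition pm_iso :: "'a set \<Rightarrow> ('a \<Rightarrow> 'a option) \<Rightarrow> 'b set \<Rightarrow> ('b \<Rightarrow> 'b option) \<Rightarrow> bool" where
  "pm_iso A f B g \<longleftrightarrow> (\<exists>h. bij_betw h A B \<and> (\<forall>x\<in>A. map_option h (f x) = g (h x)))"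

definition Pset :: "'a set \<Rightarrow> ('a \<Rightarrow> 'a option) \<Rightarrow> 'a \<Rightarrow> 'a set" where
  "Pset A f x = {y \<in> A. \<exists>n. fpow f n y = Some x}"

definition Pop :: "'a set \<Rightarrow> ('a \<Rightarrow> 'a option) \<Rightarrow> 'a \<Rightarrow> ('a \<Rightarrow> 'a option)" where
  "Pop A f x = f |` {y \<in> Pset A f x. \<exists>z \<in> Pset A f x. f y = Some z}"

definition star_cond :: "'a set \<Rightarrow> ('a \<Rightarrow> 'a option) \<Rightarrow> bool" where
  "star_cond A f \<longleftrightarrow>
     (\<forall>x1\<in>A. \<forall>x2\<in>A. \<forall>x3\<in>A.
        (x1 \<in> dom f \<and> x2 \<in> dom f \<and> x3 \<in> dom f \<and> f x1 = f x2 \<and> f x2 = f x3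
         \<and> pm_iso (Pset A f x1) (Pop A f x1) (Pset A f x2) (Pop A f x2)
         \<and> pm_iso (Pset A f x1) (Pop A f x1) (Pset A f x3) (Pop A f x3)
         \<and> pm_iso (Pset A f x2) (Pop A f x2) (Pset A f x3) (Pop A f x3))
        \<longrightarrow> card {x1, x2, x3} \<le> 2)"

definition in_Tstar :: "'a set \<Rightarrow> ('a \<Rightarrow> 'a option) \<Rightarrow> bool" where
  "in_Tstar A f \<longleftrightarrow> in_T A f \<and> star_cond A f"

text \<open>Degree levels A^(k) for finite ordinals k.  below A f k = \<Union>_{j<k} A^(j).\<close>
primrec below :: "'a set \<Rightarrow> ('a \<Rightarrow> 'a option) \<Rightarrow> nat \<Rightarrow> 'a set" where
  "below A f 0 = {}"
| "below A f (Suc k) = below A f k \<union>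
     {x \<in> A. x \<notin> below A f k \<and> {y \<in> dom f. f y = Some x} \<subseteq> below A f k}"

definition level :: "'a set \<Rightarrow> ('a \<Rightarrow> 'a option) \<Rightarrow> nat \<Rightarrow> 'a set" where
  "level A f k = {x \<in> A. x \<notin> below A f k \<and> {y \<in> dom f. f y = Some x} \<subseteq> below A f k}"

definition in_T_nat :: "nat \<Rightarrow> 'a set \<Rightarrow> ('a \<Rightarrow> 'a option) \<Rightarrow> bool" where
  "in_T_nat n A f \<longleftrightarrow> in_Tstar A f \<and> (\<exists>k. 0 < k \<and> k \<le> n \<and> cA A f \<in> level A f k)"

end

theory Submission
  imports Defs
begin

definition closedm :: "'a set \<Rightarrow> ('a \<Rightarrow> 'a option) \<Rightarrow> bool" where
  "closedm B g \<longleftrightarrow> (\<forall>x\<in>B. \<forall>z. g x = Some z \<longrightarrow> z \<in> B)"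

definition SS :: "nat \<Rightarrow> (nat set \<times> (nat \<Rightarrow> nat option)) set" where
  "SS m = {(C, k). C \<subseteq> {..<m} \<and> dom k \<subseteq> {..<m} \<and> ran k \<subseteq> {..<m} \<and> closedm C k}"

definition code :: "nat \<Rightarrow> 'a set \<Rightarrow> ('a \<Rightarrow> 'a option) \<Rightarrow> nat set \<times> (nat \<Rightarrow> nat option)" where
  "code m B g = (SOME p. p \<in> SS m \<and> pm_iso B g (fst p) (snd p))"

lemma finite_SS: "finite (SS m)"
proof -
  have "SS m \<subseteq> Pow {..<m} \<times> (\<Union>D\<in>Pow {..<m}. {k. dom k = D \<and> ran k \<subseteq> {..<m}})"
    by (auto simp: SS_def)
  moreover have "finite (Pow {..<m} \<times> (\<Union>D\<in>Pow {..<m}. {k. dom k = D \<and> ran k \<subseteq> {..<m}}))"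
    by (intro finite_cartesian_product finite_UN_I finite_Pow_iff[THEN iffD2] finite_set_of_finite_maps)
       (auto intro: finite_subset)
  ultimately show ?thesis by (rule finite_subset)
qed

lemma exists_code:
  assumes "finite B" "card B \<le> m" "closedm B g"
  shows "\<exists>p. p \<in> SS m \<and> pm_iso B g (fst p) (snd p)"
proof -
  obtain h where h: "bij_betw h B {0..<card B}" using ex_bij_betw_finite_nat[OF assms(1)] by blast
  define k where "k = (\<lambda>i. if i \<in> {0..<card B} then map_option h (g (inv_into B h i)) else None)"
  have hB: "x \<in> B \<Longrightarrow> h x \<in> {0..<card B}" for x using h by (meson bij_betw_apply)
  have inj: "inj_on h B" using h by (simp add: bij_betw_def)
  have img: "h ` B = {0..<card B}" using h by (simp add: bij_betw_def)
  have iso: "pm_iso B g {0..<card B} k"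
    unfolding pm_iso_def
    apply (rule exI[of _ h])
    using h hB inj by (auto simp: k_def inv_into_f_f)
  have inv: "i \<in> {0..<card B} \<Longrightarrow> inv_into B h i \<in> B" for i
    using img by (metis inv_into_into)
  have cl: "closedm {0..<card B} k"
    unfolding closedm_def k_def using inv assms(3) hB
    by (auto simp: closedm_def) (meson atLeastLessThan_iff)
  have d: "dom k \<subseteq> {..<m}" using assms(2) by (auto simp: k_def dom_def split: if_splits)
  have r: "ran k \<subseteq> {..<m}"
  proof
    fix w assume "w \<in> ran k"
    then obtain i where "k i = Some w" by (auto simp: ran_def)
    then have "i \<in> {0..<card B}" "w \<in> {0..<card B}" using cl
      by (auto simp: k_def closedm_def split: if_splits)
    then show "w \<in> {..<m}" using assms(2) by auto
  qed
  have "({0..<card B}, k) \<in> SS m" using cl d r assms(2) by (auto simp: SS_def)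
  then show ?thesis using iso by (intro exI[of _ "({0..<card B}, k)"]) auto
qed

lemma code_spec:
  assumes "finite B" "card B \<le> m" "closedm B g"
  shows "code m B g \<in> SS m \<and> pm_iso B g (fst (code m B g)) (snd (code m B g))"
  unfolding code_def using someI_ex[OF exists_code[OF assms]] .

lemma pm_iso_trans:
  assumes "pm_iso A f B g" "pm_iso B g C k"
  shows "pm_iso A f C k"
proof -
  obtain h1 where h1: "bij_betw h1 A B" "\<forall>x\<in>A. map_option h1 (f x) = g (h1 x)"
    using assms(1) by (auto simp: pm_iso_def)
  obtain h2 where h2: "bij_betw h2 B C" "\<forall>x\<in>B. map_option h2 (g x) = k (h2 x)"
    using assms(2) by (auto simp: pm_iso_def)
  have "bij_betw (h2 \<circ> h1) A C" using h1 h2 bij_betw_trans by blast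
  moreover have "\<forall>x\<in>A. map_option (h2 \<circ> h1) (f x) = k ((h2 \<circ> h1) x)"
  proof
    fix x assume x: "x \<in> A"
    have "map_option (h2 \<circ> h1) (f x) = map_option h2 (map_option h1 (f x))"
      by (simp add: option.map_comp)
    also have "\<dots> = map_option h2 (g (h1 x))" using h1 x by simp
    also have "\<dots> = k (h2 (h1 x))" using h2 h1 x by (meson bij_betw_apply)
    finally show "map_option (h2 \<circ> h1) (f x) = k ((h2 \<circ> h1) x)" by simp
  qed
  ultimately show ?thesis by (auto simp: pm_iso_def)
qed

lemma pm_iso_sym:
  assumes "pm_iso A f B g" "closedm A f"
  shows "pm_iso B g A f"
proof -
  obtain h where h: "bij_betw h A B" "\<forall>x\<in>A. map_option h (f x) = g (h x)"
    using assms(1) by (auto simp: pm_iso_def)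
  have b: "bij_betw (inv_into A h) B A" by (rule bij_betw_inv_into[OF h(1)])
  have "\<forall>y\<in>B. map_option (inv_into A h) (g y) = f (inv_into A h y)"
  proof
    fix y assume y: "y \<in> B"
    define x where "x = inv_into A h y"
    have x: "x \<in> A" using b y x_def by (meson bij_betw_apply)
    have hx: "h x = y" using h(1) y x_def by (metis bij_betw_def f_inv_into_f)
    have inj: "inj_on h A" using h(1) by (simp add: bij_betw_def)
    have "g y = map_option h (f x)" using h(2) x hx by simp
    then show "map_option (inv_into A h) (g y) = f (inv_into A h y)"
      unfolding x_def[symmetric]
      using assms(2) x inj by (cases "f x") (auto simp: closedm_def inv_into_f_f)
  qed
  then show ?thesis using b by (auto simp: pm_iso_def)
qed


lemma le2:
  assumes "\<forall>a\<in>F. \<forall>b\<in>F. \<forall>c\<in>F. card {a,b,c} \<le> 2"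
  shows "finite F \<and> card F \<le> 2"
proof (rule ccontr)
  assume "\<not> (finite F \<and> card F \<le> 2)"
  then obtain G where G: "G \<subseteq> F" "card G = 3"
  proof (cases "finite F")
    case True
    then have "3 \<le> card F" using \<open>\<not> (finite F \<and> card F \<le> 2)\<close> by auto
    then show ?thesis using that obtain_subset_with_card_n by metis
  next
    case False
    then show ?thesis using that infinite_arbitrarily_large by metis
  qed
  then obtain x y z where "G = {x,y,z}" "x \<noteq> y" "y \<noteq> z" "x \<noteq> z" using card_3_iff by metis
  then have "card {x,y,z} = 3" "x \<in> F" "y \<in> F" "z \<in> F" using G by auto
  then show False using assms by fastforce
qed

lemma fiber_bound:
  assumes "finite T" "\<phi> ` C \<subseteq> T"
    "\<forall>a\<in>C. \<forall>b\<in>C. \<forall>c\<in>C. \<phi> a = \<phi> b \<and> \<phi> b = \<phi> c \<longrightarrow> card {a,b,c} \<le> 2"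
  shows "finite C \<and> card C \<le> 2 * card T"
proof -
  have fib: "finite {a\<in>C. \<phi> a = t} \<and> card {a\<in>C. \<phi> a = t} \<le> 2" for t
    by (rule le2) (use assms(3) in auto)
  have eq: "C = (\<Union>t\<in>T. {a\<in>C. \<phi> a = t})" using assms(2) by auto
  have "finite C" by (subst eq) (use fib assms(1) in auto)
  moreover have "card C \<le> (\<Sum>t\<in>T. card {a\<in>C. \<phi> a = t})"
    by (subst eq) (rule card_UN_le[OF assms(1)])
  moreover have "(\<Sum>t\<in>T. card {a\<in>C. \<phi> a = t}) \<le> card T * 2"
    using sum_bounded_above[of T "\<lambda>t. card {a\<in>C. \<phi> a = t}" 2] fib by auto
  ultimately show ?thesis by auto
qed

lemma below_child: "x \<in> below A f (Suc k) \<Longrightarrow> f y = Some x \<Longrightarrow> y \<in> below A f k"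
proof (induction k arbitrary: x y)
  case 0
  then have "{z \<in> dom f. f z = Some x} \<subseteq> {}" by simp
  moreover have "y \<in> {z \<in> dom f. f z = Some x}" using 0 by auto
  ultimately show ?case by blast
next
  case (Suc k)
  have "x \<in> below A f (Suc k) \<or> {z \<in> dom f. f z = Some x} \<subseteq> below A f (Suc k)"
    using Suc.prems(1) by (simp only: below.simps) blast
  moreover have "y \<in> {z \<in> dom f. f z = Some x}" using Suc.prems(2) by auto
  moreover have "y \<in> below A f k \<Longrightarrow> y \<in> below A f (Suc k)" by simp
  ultimately show ?case using Suc.IH[of x y] Suc.prems(2) by blast
qed

lemma below_mono: "below A f k \<subseteq> below A f (k + j)"
  by (induction j) auto

lemma Pset_sub:
  assumes "dom f \<subseteq> A"
  shows "Pset A f x \<subseteq> insert x (\<Union>y\<in>{y\<in>A. f y = Some x}. Pset A f y)"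
proof
  fix z assume "z \<in> Pset A f x"
  then obtain n where z: "z \<in> A" "fpow f n z = Some x" by (auto simp: Pset_def)
  show "z \<in> insert x (\<Union>y\<in>{y\<in>A. f y = Some x}. Pset A f y)"
  proof (cases n)
    case 0 then show ?thesis using z by simp
  next
    case (Suc m)
    then obtain y where y: "fpow f m z = Some y" "f y = Some x" using z
      by (cases "fpow f m z") auto
    then have "y \<in> A" using assms by auto
    then show ?thesis using y z by (auto simp: Pset_def)
  qed
qed

fun N :: "nat \<Rightarrow> nat" where
  "N 0 = 0"
| "N (Suc h) = Suc (2 * card (SS (N h)) * N h)"

lemma closed_Pop: "closedm (Pset A f y) (Pop A f y)"
  by (auto simp: closedm_def Pop_def restrict_map_def split: if_splits)

lemma claim:
  assumes dom: "dom f \<subseteq> A" and star: "star_cond A f"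
  shows "\<forall>x\<in>below A f h. finite (Pset A f x) \<and> card (Pset A f x) \<le> N h"
proof (induction h)
  case 0 show ?case by simp
next
  case (Suc h)
  show ?case
  proof
    fix x assume x: "x \<in> below A f (Suc h)"
    define C where "C = {y\<in>A. f y = Some x}"
    have Cb: "C \<subseteq> below A f h"
    proof
      fix y assume "y \<in> C"
      then have "f y = Some x" by (simp add: C_def)
      then show "y \<in> below A f h" by (rule below_child[OF x])
    qed
    have Pfin: "\<forall>y\<in>C. finite (Pset A f y) \<and> card (Pset A f y) \<le> N h" using Suc.IH Cb by blast
    define \<phi> where "\<phi> y = code (N h) (Pset A f y) (Pop A f y)" for y
    have \<phi>: "\<phi> y \<in> SS (N h) \<and> pm_iso (Pset A f y) (Pop A f y) (fst (\<phi> y)) (snd (\<phi> y))"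
      if "y\<in>C" for y
      unfolding \<phi>_def using Pfin that by (intro code_spec closed_Pop) auto
    have iso: "pm_iso (Pset A f u) (Pop A f u) (Pset A f v) (Pop A f v)"
      if "u\<in>C" "v\<in>C" "\<phi> u = \<phi> v" for u v
    proof -
      have i1: "pm_iso (Pset A f u) (Pop A f u) (fst (\<phi> v)) (snd (\<phi> v))"
        using conjunct2[OF \<phi>[OF that(1)]] unfolding that(3) .
      have i2: "pm_iso (fst (\<phi> v)) (snd (\<phi> v)) (Pset A f v) (Pop A f v)"
        by (rule pm_iso_sym[OF conjunct2[OF \<phi>[OF that(2)]] closed_Pop])
      show ?thesis using pm_iso_trans[OF i1 i2] .
    qed
    have fC: "finite C \<and> card C \<le> 2 * card (SS (N h))"
    proof (rule fiber_bound[OF finite_SS])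
      show "\<phi> ` C \<subseteq> SS (N h)" using \<phi> by auto
      show "\<forall>a\<in>C. \<forall>b\<in>C. \<forall>c\<in>C. \<phi> a = \<phi> b \<and> \<phi> b = \<phi> c \<longrightarrow> card {a,b,c} \<le> 2"
      proof (intro ballI impI)
        fix a b c assume abc: "a \<in> C" "b \<in> C" "c \<in> C" and eq: "\<phi> a = \<phi> b \<and> \<phi> b = \<phi> c"
        have e: "\<phi> a = \<phi> b" "\<phi> a = \<phi> c" "\<phi> b = \<phi> c" using eq by simp_all
        note i1 = iso[OF abc(1) abc(2) e(1)]
        note i2 = iso[OF abc(1) abc(3) e(2)]
        note i3 = iso[OF abc(2) abc(3) e(3)]
        have m: "a \<in> A" "b \<in> A" "c \<in> A" "f a = Some x" "f b = Some x" "f c = Some x"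
          using abc by (simp_all add: C_def)
        then have d: "a \<in> dom f" "b \<in> dom f" "c \<in> dom f" "f a = f b" "f b = f c" by auto
        show "card {a,b,c} \<le> 2"
          apply (rule star[unfolded star_cond_def, rule_format, OF m(1) m(2) m(3)])
          by (intro conjI d i1 i2 i3)
      qed
    qed
    have fU: "finite (\<Union>y\<in>C. Pset A f y)" using fC Pfin by auto
    have c1: "card (Pset A f x) \<le> card (insert x (\<Union>y\<in>C. Pset A f y))"
      using Pset_sub[OF dom, of x] fU unfolding C_def[symmetric] by (intro card_mono) auto
    have c2: "card (insert x (\<Union>y\<in>C. Pset A f y)) \<le> Suc (card (\<Union>y\<in>C. Pset A f y))"
      using fU by (simp add: card_insert_if)
    have c3: "card (\<Union>y\<in>C. Pset A f y) \<le> (\<Sum>y\<in>C. card (Pset A f y))"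
      using card_UN_le fC by blast
    have c4: "(\<Sum>y\<in>C. card (Pset A f y)) \<le> card C * N h"
      using sum_bounded_above[of C "\<lambda>y. card (Pset A f y)" "N h"] Pfin by auto
    have c5: "card C * N h \<le> 2 * card (SS (N h)) * N h" using fC by simp
    have "card (Pset A f x) \<le> N (Suc h)" unfolding N.simps using c1 c2 c3 c4 c5 by linarith
    moreover have "finite (Pset A f x)"
      using Pset_sub[OF dom, of x] fU unfolding C_def[symmetric] by (meson finite_insert finite_subset)
    ultimately show "finite (Pset A f x) \<and> card (Pset A f x) \<le> N (Suc h)" by simp
  qed
qed


lemma fpow_c: "c \<notin> dom f \<Longrightarrow> fpow f m c = (if m = 0 then Some c else None)"
proof (induction m)
  case 0 then show ?case by simp
next
  case (Suc m) then show ?case by (cases m) (auto simp: dom_def)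
qed

lemma Tn_facts:
  assumes "in_T_nat n A f"
  shows "finite A \<and> card A \<le> N (Suc n) \<and> closedm A f"
proof -
  have T: "in_T A f" and st: "star_cond A f" and k: "\<exists>k. 0 < k \<and> k \<le> n \<and> cA A f \<in> level A f k"
    using assms by (auto simp: in_T_nat_def in_Tstar_def)
  have pm: "pmua A f" and con: "pm_connected A f" and ex: "\<exists>!c. c \<in> A \<and> c \<notin> dom f"
    using T by (auto simp: in_T_def)
  define c where "c = cA A f"
  have c: "c \<in> A \<and> c \<notin> dom f" unfolding c_def cA_def by (rule theI'[OF ex])
  obtain j where j: "j \<le> n" "c \<in> level A f j" using k c_def by auto
  have "c \<in> below A f (Suc j)" using j(2) by (simp add: level_def)
  moreover have "below A f (Suc j) \<subseteq> below A f (Suc j + (n - j))" by (rule below_mono)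
  ultimately have cb: "c \<in> below A f (Suc n)" using j(1) by auto
  have dom: "dom f \<subseteq> A" and ran: "ran f \<subseteq> A" using pm by (auto simp: pmua_def)
  have sub: "A \<subseteq> Pset A f c"
  proof
    fix x assume x: "x \<in> A"
    have "\<exists>m m'. fpow f m x \<noteq> None \<and> fpow f m x = fpow f m' c"
      using con x c unfolding pm_connected_def by blast
    then obtain m m' where mm: "fpow f m x \<noteq> None" "fpow f m x = fpow f m' c" by blast
    then have "fpow f m x = Some c" using fpow_c[of c f m'] c by (auto split: if_splits)
    then show "x \<in> Pset A f c" using x by (auto simp: Pset_def)
  qed
  have "finite (Pset A f c) \<and> card (Pset A f c) \<le> N (Suc n)"
    using claim[OF dom st] cb by blast
  then have "finite A \<and> card A \<le> N (Suc n)" using sub by (meson card_mono finite_subset le_trans)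
  moreover have "closedm A f" using ran by (auto simp: closedm_def ran_def)
  ultimately show ?thesis by simp
qed

theorem lemma3p1:
  fixes n :: nat
  shows "finite ({(A, f :: 'a \<Rightarrow> 'a option). in_T_nat n A f}
                 // {((A, f), (B, g)). pm_iso A f B g})"
proof -
  define X where "X = {(A, f :: 'a \<Rightarrow> 'a option). in_T_nat n A f}"
  define r where "r = {((A::'a set, f :: 'a \<Rightarrow> 'a option), (B::'a set, g :: 'a \<Rightarrow> 'a option)). pm_iso A f B g}"
  define M where "M = N (Suc n)"
  define cd where "cd p = code M (fst p) (snd p)" for p :: "'a set \<times> ('a \<Rightarrow> 'a option)"
  have cd: "cd p \<in> SS M \<and> pm_iso (fst p) (snd p) (fst (cd p)) (snd (cd p))" if "p \<in> X" for p
  proof -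
    obtain A f where pA: "p = (A, f)" by (cases p)
    have "in_T_nat n A f" using that pA unfolding X_def by simp
    from Tn_facts[OF this] have "finite (fst p) \<and> card (fst p) \<le> M \<and> closedm (fst p) (snd p)"
      unfolding M_def pA by simp
    then show ?thesis unfolding cd_def by (intro code_spec) auto
  qed
  have clp: "closedm (fst p) (snd p)" if "p \<in> X" for p
  proof -
    obtain A f where pA: "p = (A, f)" by (cases p)
    have "in_T_nat n A f" using that pA unfolding X_def by simp
    from Tn_facts[OF this] show ?thesis unfolding pA by simp
  qed
  have rimg: "r `` {p} = {q. pm_iso (fst p) (snd p) (fst q) (snd q)}" for p
    unfolding r_def by (cases p) auto
  have isoeq: "pm_iso (fst p) (snd p) (fst q) (snd q)" if "p \<in> X" "q \<in> X" "cd p = cd q" for p q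
  proof -
    have i1: "pm_iso (fst p) (snd p) (fst (cd q)) (snd (cd q))"
      using conjunct2[OF cd[OF that(1)]] unfolding that(3) .
    have i2: "pm_iso (fst (cd q)) (snd (cd q)) (fst q) (snd q)"
      by (rule pm_iso_sym[OF conjunct2[OF cd[OF that(2)]] clp[OF that(2)]])
    show ?thesis by (rule pm_iso_trans[OF i1 i2])
  qed
  have req: "r `` {p} = r `` {q}" if "p \<in> X" "q \<in> X" "cd p = cd q" for p q
  proof -
    have a: "pm_iso (fst p) (snd p) (fst q) (snd q)" by (rule isoeq[OF that])
    have b: "pm_iso (fst q) (snd q) (fst p) (snd p)" by (rule isoeq[OF that(2) that(1) that(3)[symmetric]])
    show ?thesis unfolding rimg by (auto intro: pm_iso_trans[OF a] pm_iso_trans[OF b])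
  qed
  define G where "G c = r `` {SOME p. p \<in> X \<and> cd p = c}" for c
  have "X // r \<subseteq> G ` (SS M)"
  proof
    fix Q assume "Q \<in> X // r"
    then obtain p where p: "p \<in> X" "Q = r `` {p}" by (auto simp: quotient_def)
    have ex: "\<exists>p'. p' \<in> X \<and> cd p' = cd p" using p by blast
    define p' where "p' = (SOME p'. p' \<in> X \<and> cd p' = cd p)"
    have p': "p' \<in> X \<and> cd p' = cd p" unfolding p'_def by (rule someI_ex[OF ex])
    have "Q = G (cd p)" unfolding G_def p(2) p'_def[symmetric]
      using req[OF p(1)] p' by simp
    moreover have "cd p \<in> SS M" using cd p by blast
    ultimately show "Q \<in> G ` (SS M)" by blast
  qed
  then have "finite (X // r)" by (rule finite_surj[OF finite_SS])
  then show ?thesis unfolding X_def r_def .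
qed

end
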